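(* Let $d\ge1$, $p>1$ with $p(d-2)<d$, $q=p/(p-1)$. For $a>0$ let $\rho(a)=\inf\{a\|h\|_2^2+\tfrac12\|\nabla h\|_2^2:\ h\in L^{2p}(\mathbb R^d),\ \|h\|_{2p}=1\}$, and let $\chi_{d,p}=\inf\{\tfrac12\|\nabla g\|_2^2:\ g\in L^2(\mathbb R^d)\cap L^{2p}(\mathbb R^d),\ \|g\|_2=\|g\|_{2p}=1\}$. Then $$\inf\{a-\rho(a):\ a>0\}=-\chi_{d,p}.$$
   Context: $\|\cdot\|_r$ is the $L^r(\mathbb R^d)$ norm; $\nabla$ the weak gradient with $\|\nabla h\|_2^2=\sum_i\|\partial_ih\|_2^2$ ($+\infty$ if $h\notin H^1$). *)

theory Defs
  imports "HOL-Analysis.Analysis"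
begin

text \<open>Functions on R^d are modelled as real-valued functions on a Euclidean space 'a,
  with d = DIM('a); the partial derivatives are taken along the basis vectors.\<close>

fun Ck :: "nat \<Rightarrow> ('a::euclidean_space \<Rightarrow> real) \<Rightarrow> bool" where
  "Ck 0 f = continuous_on UNIV f"
| "Ck (Suc k) f = (continuous_on UNIV f \<and>
     (\<exists>D. (\<forall>x. (f has_derivative D x) (at x)) \<and> (\<forall>b\<in>Basis. Ck k (\<lambda>x. D x b))))"

definition test_fn :: "('a::euclidean_space \<Rightarrow> real) \<Rightarrow> bool" where
  "test_fn \<phi> \<longleftrightarrow> (\<forall>k. Ck k \<phi>) \<and> compact (closure {x. \<phi> x \<noteq> 0})"

definition loc_int :: "('a::euclidean_space \<Rightarrow> real) \<Rightarrow> bool" where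
  "loc_int f \<longleftrightarrow> f \<in> borel_measurable lebesgue \<and>
     (\<forall>K. compact K \<longrightarrow> set_integrable lebesgue K f)"

definition weak_partial :: "('a::euclidean_space \<Rightarrow> real) \<Rightarrow> 'a \<Rightarrow> ('a \<Rightarrow> real) \<Rightarrow> bool" where
  "weak_partial h b g \<longleftrightarrow> loc_int h \<and> loc_int g \<and>
     (\<forall>\<phi>. test_fn \<phi> \<longrightarrow>
        (LINT x|lebesgue. h x * frechet_derivative \<phi> (at x) b) = - (LINT x|lebesgue. g x * \<phi> x))"

definition Lpow :: "real \<Rightarrow> ('a::euclidean_space \<Rightarrow> real) \<Rightarrow> ennreal" where
  "Lpow r h = (\<integral>\<^sup>+ x. ennreal (\<bar>h x\<bar> powr r) \<partial>lebesgue)"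

definition memLp :: "real \<Rightarrow> ('a::euclidean_space \<Rightarrow> real) \<Rightarrow> bool" where
  "memLp r h \<longleftrightarrow> h \<in> borel_measurable lebesgue \<and> Lpow r h < \<infinity>"

definition Lnorm :: "real \<Rightarrow> ('a::euclidean_space \<Rightarrow> real) \<Rightarrow> real" where
  "Lnorm r h = enn2real (Lpow r h) powr (1 / r)"

definition H1 :: "('a::euclidean_space \<Rightarrow> real) \<Rightarrow> bool" where
  "H1 h \<longleftrightarrow> memLp 2 h \<and> (\<forall>b\<in>Basis. \<exists>g. weak_partial h b g \<and> memLp 2 g)"

text \<open>||grad h||_2^2, equal to +infinity if h is not in H^1. (Weak derivatives are unique a.e.,
  so the choice below does not matter.)\<close>
definition grad_sq :: "('a::euclidean_space \<Rightarrow> real) \<Rightarrow> ennreal" where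
  "grad_sq h = (if H1 h then (\<Sum>b\<in>Basis. Lpow 2 (SOME g. weak_partial h b g \<and> memLp 2 g))
                else \<infinity>)"

definition rho :: "real \<Rightarrow> real \<Rightarrow> 'a::euclidean_space itself \<Rightarrow> ennreal" where
  "rho p a _ = (INF h \<in> {h :: 'a \<Rightarrow> real. memLp (2*p) h \<and> Lnorm (2*p) h = 1}.
                 ennreal a * Lpow 2 h + grad_sq h / 2)"

definition chi :: "real \<Rightarrow> 'a::euclidean_space itself \<Rightarrow> ennreal" where
  "chi p _ = (INF g \<in> {g :: 'a \<Rightarrow> real. memLp 2 g \<and> memLp (2*p) g \<and>
                 Lnorm 2 g = 1 \<and> Lnorm (2*p) g = 1}. grad_sq g / 2)"

end

theory Submission
  imports Defs "HOL-Computational_Algebra.Polynomial"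
begin


lemma Ck_cont: "Ck k f \<Longrightarrow> continuous_on UNIV f"
  by (cases k) auto

lemma Ck_mono: "Ck (Suc k) f \<Longrightarrow> Ck k f"
proof (induction k arbitrary: f)
  case 0 then show ?case by auto
next
  case (Suc k)
  from Suc.prems obtain D where c: "continuous_on UNIV f" and D: "\<forall>x. (f has_derivative D x) (at x)"
    and P: "\<forall>b\<in>Basis. Ck (Suc k) (\<lambda>x. D x b)" by auto
  show ?case using c D P Suc.IH by auto
qed

lemma Ck_mono_le: "m \<le> k \<Longrightarrow> Ck k f \<Longrightarrow> Ck m f"
proof (induction k)
  case 0 then show ?case by auto
next
  case (Suc k) then show ?case using Ck_mono le_Suc_eq by blast
qed

lemma Ck_const: "Ck k (\<lambda>x::'a::euclidean_space. c)"
proof (induction k arbitrary: c)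
  case 0 then show ?case by auto
next
  case (Suc k)
  have "\<forall>x. ((\<lambda>x::'a. c) has_derivative (\<lambda>v. 0)) (at x)" by auto
  then show ?case using Suc.IH by (auto intro!: exI[of _ "\<lambda>x v. 0"])
qed

lemma Ck_add: "Ck k f \<Longrightarrow> Ck k g \<Longrightarrow> Ck k (\<lambda>x::'a::euclidean_space. f x + g x)"
proof (induction k arbitrary: f g)
  case 0 then show ?case by (auto intro: continuous_on_add)
next
  case (Suc k)
  from Suc.prems(1) obtain Df where cf: "continuous_on UNIV f" and Df: "\<forall>x. (f has_derivative Df x) (at x)"
    and Pf: "\<forall>b\<in>Basis. Ck k (\<lambda>x. Df x b)" by auto
  from Suc.prems(2) obtain Dg where cg: "continuous_on UNIV g" and Dg: "\<forall>x. (g has_derivative Dg x) (at x)"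
    and Pg: "\<forall>b\<in>Basis. Ck k (\<lambda>x. Dg x b)" by auto
  show ?case
    apply (simp only: Ck.simps)
    apply (intro conjI continuous_on_add cf cg exI[of _ "\<lambda>x v. Df x v + Dg x v"])
    using Df Dg Pf Pg Suc.IH by (auto intro: has_derivative_add)
qed

lemma Ck_mult: "Ck k f \<Longrightarrow> Ck k g \<Longrightarrow> Ck k (\<lambda>x::'a::euclidean_space. f x * g x)"
proof (induction k arbitrary: f g)
  case 0 then show ?case by (auto intro: continuous_on_mult)
next
  case (Suc k)
  from Suc.prems(1) obtain Df where cf: "continuous_on UNIV f" and Df: "\<forall>x. (f has_derivative Df x) (at x)"
    and Pf: "\<forall>b\<in>Basis. Ck k (\<lambda>x. Df x b)" by auto
  from Suc.prems(2) obtain Dg where cg: "continuous_on UNIV g" and Dg: "\<forall>x. (g has_derivative Dg x) (at x)"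
    and Pg: "\<forall>b\<in>Basis. Ck k (\<lambda>x. Dg x b)" by auto
  have fk: "Ck k f" "Ck k g" using Suc.prems Ck_mono by blast+
  show ?case
    apply (simp only: Ck.simps)
    apply (intro conjI continuous_on_mult cf cg exI[of _ "\<lambda>x v. f x * Dg x v + Df x v * g x"])
    using Df Dg Pf Pg Suc.IH fk by (auto intro: has_derivative_mult Ck_add)
qed

lemma Ck_cmult: "Ck k f \<Longrightarrow> Ck k (\<lambda>x::'a::euclidean_space. c * f x)"
  using Ck_mult[OF Ck_const] by blast

lemma Ck_diff: "Ck k f \<Longrightarrow> Ck k g \<Longrightarrow> Ck k (\<lambda>x::'a::euclidean_space. f x - g x)"
  using Ck_add[of k f "\<lambda>x. (-1) * g x"] Ck_cmult[of k g "-1"] by simp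

lemma Ck_exp: "Ck k f \<Longrightarrow> Ck k (\<lambda>x::'a::euclidean_space. exp (f x))"
proof (induction k arbitrary: f)
  case 0 then show ?case by (auto intro: continuous_on_exp)
next
  case (Suc k)
  from Suc.prems(1) obtain Df where cf: "continuous_on UNIV f" and Df: "\<forall>x. (f has_derivative Df x) (at x)"
    and Pf: "\<forall>b\<in>Basis. Ck k (\<lambda>x. Df x b)" by auto
  have fk: "Ck k f" using Suc.prems Ck_mono by blast
  have "((\<lambda>x. exp (f x)) has_derivative (\<lambda>v. Df x v * exp (f x))) (at x)" for x
    using Df has_derivative_exp by blast
  moreover have "\<forall>b\<in>Basis. Ck k (\<lambda>x. Df x b * exp (f x))"
    using Pf Suc.IH[OF fk] Ck_mult by blast
  moreover have "continuous_on UNIV (\<lambda>x. exp (f x))" using cf by (rule continuous_on_exp)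
  ultimately show ?case
    by (simp only: Ck.simps) (intro conjI exI[of _ "\<lambda>x v. Df x v * exp (f x)"] allI; simp)
qed

lemma Ck_scale: "Ck k f \<Longrightarrow> Ck k (\<lambda>x::'a::euclidean_space. f (m *\<^sub>R x))"
proof (induction k arbitrary: f)
  case 0
  have "continuous_on UNIV (\<lambda>x::'a. m *\<^sub>R x)" by (intro continuous_intros)
  from continuous_on_compose2[OF Ck_cont[OF 0] this] show ?case by simp
next
  case (Suc k)
  from Suc.prems(1) obtain Df where cf: "continuous_on UNIV f" and Df: "\<forall>x. (f has_derivative Df x) (at x)"
    and Pf: "\<forall>b\<in>Basis. Ck k (\<lambda>x. Df x b)" by auto
  have "((\<lambda>x. f (m *\<^sub>R x)) has_derivative (\<lambda>v. m * Df (m *\<^sub>R x) v)) (at x)" for x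
  proof -
    have "((\<lambda>x. f (m *\<^sub>R x)) has_derivative (\<lambda>v. Df (m *\<^sub>R x) (m *\<^sub>R v))) (at x)"
    proof -
      have g: "((\<lambda>x. m *\<^sub>R x) has_derivative (\<lambda>v. m *\<^sub>R v)) (at x)"
        by (rule bounded_linear_imp_has_derivative[OF bounded_linear_scaleR_right])
      have "(f has_derivative Df (m *\<^sub>R x)) (at (m *\<^sub>R x))" using Df by blast
      from has_derivative_compose[OF g this] show ?thesis .
    qed
    moreover have "Df (m *\<^sub>R x) (m *\<^sub>R v) = m * Df (m *\<^sub>R x) v" for v
      using Df has_derivative_linear linear_scale by fastforce
    ultimately show ?thesis by simp
  qed
  moreover have "\<forall>b\<in>Basis. Ck k (\<lambda>x. m * Df (m *\<^sub>R x) b)"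
    using Pf Suc.IH Ck_cmult by blast
  moreover have "continuous_on UNIV (\<lambda>x. f (m *\<^sub>R x))"
    using Suc.IH[of f] Suc.prems Ck_mono Ck_cont by blast
  ultimately show ?case
    by (simp only: Ck.simps) (intro conjI exI[of _ "\<lambda>x v. m * Df (m *\<^sub>R x) v"] allI; simp)
qed

lemma Ck_comp1: "Ck k (\<psi>::real\<Rightarrow>real) \<Longrightarrow> Ck k (\<lambda>x::'a::euclidean_space. \<psi> (m * (x \<bullet> b) + c))"
proof (induction k arbitrary: \<psi>)
  case 0
  have "continuous_on UNIV (\<lambda>x::'a. m * (x \<bullet> b) + c)" by (intro continuous_intros)
  from continuous_on_compose2[OF Ck_cont[OF 0] this] show ?case by simp
next
  case (Suc k)
  from Suc.prems(1) obtain D where cf: "continuous_on UNIV \<psi>" and D: "\<forall>x. (\<psi> has_derivative D x) (at x)"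
    and Pf: "Ck k (\<lambda>x. D x 1)" by auto
  have lin: "D t s = s * D t 1" for t s
  proof -
    have "linear (D t)" using D has_derivative_linear by blast
    from linear_scale[OF this, of s 1] show ?thesis by simp
  qed
  have "((\<lambda>x. \<psi> (m * (x \<bullet> b) + c)) has_derivative (\<lambda>v. (m * (v \<bullet> b)) * D (m * (x \<bullet> b) + c) 1)) (at x)" for x
  proof -
    have "((\<lambda>x. \<psi> (m * (x \<bullet> b) + c)) has_derivative (\<lambda>v. D (m * (x \<bullet> b) + c) (m * (v \<bullet> b)))) (at x)"
    proof -
      have g: "((\<lambda>x. m * (x \<bullet> b) + c) has_derivative (\<lambda>v. m * (v \<bullet> b))) (at x)"
        by (intro derivative_eq_intros) auto
      have "(\<psi> has_derivative D (m * (x \<bullet> b) + c)) (at (m * (x \<bullet> b) + c))" using D by blast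
      from has_derivative_compose[OF g this] show ?thesis .
    qed
    moreover have "(\<lambda>v. D (m * (x \<bullet> b) + c) (m * (v \<bullet> b))) = (\<lambda>v. (m * (v \<bullet> b)) * D (m * (x \<bullet> b) + c) 1)"
      by (rule ext) (rule lin)
    ultimately show ?thesis by simp
  qed
  moreover have "\<forall>b'\<in>Basis. Ck k (\<lambda>x. (m * (b' \<bullet> b)) * D (m * (x \<bullet> b) + c) 1)"
    using Ck_cmult[OF Suc.IH[OF Pf]] by blast
  moreover have "continuous_on UNIV (\<lambda>x::'a. \<psi> (m * (x \<bullet> b) + c))"
    using Suc.IH[of \<psi>] Suc.prems Ck_mono Ck_cont by blast
  ultimately show ?case
    by (simp only: Ck.simps) (intro conjI exI[of _ "\<lambda>x v. (m * (v \<bullet> b)) * D (m * (x \<bullet> b) + c) 1"] allI; simp)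
qed

lemma Ck_prod: "finite S \<Longrightarrow> (\<And>i. i \<in> S \<Longrightarrow> Ck k (f i)) \<Longrightarrow> Ck k (\<lambda>x::'a::euclidean_space. \<Prod>i\<in>S. f i x)"
proof (induction S rule: finite_induct)
  case empty then show ?case using Ck_const by simp
next
  case (insert a S) then show ?case using Ck_mult[of k "f a"] by simp
qed



definition FP :: "real poly \<Rightarrow> real \<Rightarrow> real" where
  "FP P t = (if 0 < t then poly P (inverse t) * exp (- inverse t) else 0)"

definition QP :: "real poly \<Rightarrow> real poly" where
  "QP P = [:0,0,1:] * (P - pderiv P)"

lemma lim_poly_exp: "((\<lambda>y::real. poly P y * exp (- y)) \<longlongrightarrow> 0) at_top"
proof -
  have eq: "poly P y * exp (- y) = (\<Sum>i\<le>degree P. coeff P i * (y ^ i / exp y))" for y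
  proof -
    have "poly P y * exp (- y) = (\<Sum>i\<le>degree P. coeff P i * y ^ i) / exp y"
      by (simp add: poly_altdef exp_minus divide_inverse)
    also have "\<dots> = (\<Sum>i\<le>degree P. coeff P i * (y ^ i / exp y))"
      by (simp add: sum_divide_distrib)
    finally show ?thesis .
  qed
  have "((\<lambda>y. \<Sum>i\<le>degree P. coeff P i * (y ^ i / exp y)) \<longlongrightarrow> (\<Sum>i\<le>degree P. coeff P i * 0)) at_top"
    by (intro tendsto_sum tendsto_mult tendsto_const tendsto_power_div_exp_0)
  then show ?thesis unfolding eq by simp
qed

lemma lim0: "((\<lambda>t. poly P (inverse t) * exp (- inverse t)) \<longlongrightarrow> 0) (at_right (0::real))"
  using filterlim_compose[OF lim_poly_exp filterlim_inverse_at_top_right, of P] by simp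

lemma deriv_pos:
  assumes "t > 0"
  shows "((\<lambda>t. poly P (inverse t) * exp (- inverse t)) has_real_derivative
           poly (QP P) (inverse t) * exp (- inverse t)) (at t)"
proof -
  have i: "((\<lambda>x. inverse x) has_real_derivative - (inverse t ^ 2)) (at t)"
    using DERIV_inverse[of t UNIV] assms by (simp add: power2_eq_square)
  have a: "((\<lambda>x. poly P (inverse x)) has_real_derivative poly (pderiv P) (inverse t) * - (inverse t ^ 2)) (at t)"
    using DERIV_chain2[OF poly_DERIV i] .
  have b: "((\<lambda>x. exp (- inverse x)) has_real_derivative exp (- inverse t) * (inverse t ^ 2)) (at t)"
    using DERIV_chain2[OF DERIV_exp DERIV_minus[OF i]] by simp
  have alg: "poly (pderiv P) y * - (y ^ 2) * E + E * (y ^ 2) * poly P y = poly (QP P) y * (E::real)" for y E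
    by (simp add: QP_def algebra_simps power2_eq_square)
  show ?thesis
    by (rule DERIV_cong[OF DERIV_mult[OF a b]]) (rule alg)
qed

lemma FP_deriv: "(FP P has_real_derivative FP (QP P) t) (at t)"
proof (cases "t > 0")
  case True
  have e: "FP (QP P) t = poly (QP P) (inverse t) * exp (- inverse t)" using True by (simp add: FP_def)
  show ?thesis unfolding e
    by (rule has_field_derivative_transform_within_open[OF deriv_pos[OF True], where S="{0<..}"])
       (use True in \<open>auto simp: FP_def\<close>)
next
  case False
  show ?thesis
  proof (cases "t < 0")
    case True
    have "((\<lambda>_. 0) has_real_derivative 0) (at t)" by simp
    moreover have e: "FP (QP P) t = 0" using True by (simp add: FP_def)
    show ?thesis unfolding e
      by (rule has_field_derivative_transform_within_open[OF \<open>((\<lambda>_. 0) has_real_derivative 0) (at t)\<close>, where S="{..<0}"])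
         (use True in \<open>auto simp: FP_def\<close>)
  next
    case False
    with \<open>\<not> t > 0\<close> have t: "t = 0" by simp
    have "((\<lambda>h. (FP P (0 + h) - FP P 0) / h) \<longlongrightarrow> 0) (at 0)"
    proof (rule filterlim_split_at)
      show "((\<lambda>h. (FP P (0 + h) - FP P 0) / h) \<longlongrightarrow> 0) (at_left 0)"
      proof (rule tendsto_eventually)
        have "\<forall>\<^sub>F h in at_left (0::real). h < 0"
          unfolding eventually_at_filter by simp
        then show "\<forall>\<^sub>F h in at_left 0. (FP P (0 + h) - FP P 0) / h = 0"
          by eventually_elim (simp add: FP_def)
      qed
      have lim: "((\<lambda>h. poly (pCons 0 P) (inverse h) * exp (- inverse h)) \<longlongrightarrow> 0) (at_right 0)"
        by (rule lim0)
      have ev: "\<forall>\<^sub>F h in at_right 0. poly (pCons 0 P) (inverse h) * exp (- inverse h) = (FP P (0 + h) - FP P 0) / h"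
      proof -
        have "\<forall>\<^sub>F h in at_right (0::real). h > 0"
          using eventually_at_right_real[of 0 1] by (auto elim: eventually_mono)
        then show ?thesis by eventually_elim (simp add: FP_def field_simps)
      qed
      show "((\<lambda>h. (FP P (0 + h) - FP P 0) / h) \<longlongrightarrow> 0) (at_right 0)"
        by (rule tendsto_cong[THEN iffD1, OF ev lim])
    qed
    then have "(FP P has_real_derivative 0) (at 0)" unfolding DERIV_def by simp
    moreover have "FP (QP P) 0 = 0" by (simp add: FP_def)
    ultimately show ?thesis using t by simp
  qed
qed

lemma Ck_FP: "Ck k (FP P)"
proof (induction k arbitrary: P)
  case 0
  have "continuous_on UNIV (FP P)"
    using FP_deriv DERIV_isCont continuous_at_imp_continuous_on by blast
  then show ?case by simp
next
  case (Suc k)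
  have c: "continuous_on UNIV (FP P)"
    using FP_deriv DERIV_isCont continuous_at_imp_continuous_on by blast
  have d: "\<forall>t. (FP P has_derivative (\<lambda>s. FP (QP P) t * s)) (at t)"
    using FP_deriv unfolding has_field_derivative_def by blast
  show ?case
    by (simp only: Ck.simps) (intro conjI c exI[of _ "\<lambda>t s. FP (QP P) t * s"] d; simp add: Suc.IH)
qed

lemma FP1_pos: "FP 1 t > 0 \<longleftrightarrow> t > 0" and FP1_nonneg: "FP 1 t \<ge> 0"
  by (auto simp: FP_def)

definition bump :: "'a::euclidean_space \<Rightarrow> 'a \<Rightarrow> 'a \<Rightarrow> real" where
  "bump l u x = (\<Prod>b\<in>Basis. FP 1 (1 * (x \<bullet> b) + - (l \<bullet> b)) * FP 1 ((-1) * (x \<bullet> b) + u \<bullet> b))"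

lemma Ck_bump: "Ck k (bump l u)"
  unfolding bump_def[abs_def]
  by (intro Ck_prod Ck_mult Ck_comp1 Ck_FP) auto

lemma bump_nonneg: "bump l u x \<ge> 0"
  unfolding bump_def by (intro prod_nonneg mult_nonneg_nonneg FP1_nonneg)

lemma bump_pos: "bump l u x > 0 \<longleftrightarrow> x \<in> box l u"
proof
  assume "x \<in> box l u"
  then show "bump l u x > 0" unfolding bump_def mem_box
    by (intro prod_pos mult_pos_pos) (auto simp: FP1_pos)
next
  assume p: "bump l u x > 0"
  show "x \<in> box l u" unfolding mem_box
  proof
    fix b :: 'a assume b: "b \<in> Basis"
    have "(\<Prod>b\<in>Basis. FP 1 (1 * (x \<bullet> b) + - (l \<bullet> b)) * FP 1 ((-1) * (x \<bullet> b) + u \<bullet> b)) \<noteq> 0"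
      using p unfolding bump_def by linarith
    then have "FP 1 (1 * (x \<bullet> b) + - (l \<bullet> b)) * FP 1 ((-1) * (x \<bullet> b) + u \<bullet> b) \<noteq> 0"
      using b prod_zero_iff[OF finite_Basis] by blast
    then show "l \<bullet> b < x \<bullet> b \<and> x \<bullet> b < u \<bullet> b"
      by (auto simp: FP_def split: if_splits)
  qed
qed

lemma bump_zero: "x \<notin> box l u \<Longrightarrow> bump l u x = 0"
  using bump_pos[of l u x] bump_nonneg[of l u x] by linarith

definition tfn :: "nat \<Rightarrow> 'a::euclidean_space \<Rightarrow> 'a \<Rightarrow> 'a \<Rightarrow> real" where
  "tfn n l u x = 1 - exp ((- real n) * bump l u x)"

lemma Ck_tfn: "Ck k (tfn n l u)"
  unfolding tfn_def[abs_def]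
  by (intro Ck_diff Ck_const Ck_exp Ck_cmult Ck_bump)

lemma tfn_support: "n > 0 \<Longrightarrow> {x. tfn n l u x \<noteq> 0} = box l u"
proof -
  assume n: "n > 0"
  have "tfn n l u x \<noteq> 0 \<longleftrightarrow> bump l u x \<noteq> 0" for x
  proof -
    have "tfn n l u x \<noteq> 0 \<longleftrightarrow> (- real n) * bump l u x \<noteq> 0"
      unfolding tfn_def by (metis exp_eq_one_iff eq_iff_diff_eq_0)
    also have "\<dots> \<longleftrightarrow> bump l u x \<noteq> 0" using n by simp
    finally show ?thesis .
  qed
  moreover have "bump l u x \<noteq> 0 \<longleftrightarrow> x \<in> box l u" for x
    using bump_pos[of l u x] bump_nonneg[of l u x] by linarith
  ultimately show ?thesis by blast
qed

lemma test_tfn: "n > 0 \<Longrightarrow> test_fn (tfn n l u)"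
proof -
  assume n: "n > 0"
  show ?thesis unfolding test_fn_def tfn_support[OF n]
    by (intro conjI allI Ck_tfn) (simp add: bounded_box)
qed

lemma tfn_bounds: "0 \<le> tfn n l u x" "tfn n l u x \<le> 1"
  using bump_nonneg[of l u x] by (auto simp: tfn_def mult_nonneg_nonneg)

lemma tfn_lim: "(\<lambda>n. tfn n l u x) \<longlonglongrightarrow> indicator (box l u) x"
proof (cases "x \<in> box l u")
  case True
  then have p: "bump l u x > 0" using bump_pos by blast
  have eq: "tfn n l u x = 1 - exp (- bump l u x) ^ n" for n
    unfolding tfn_def by (simp add: exp_of_nat_mult[symmetric])
  have "(\<lambda>n. exp (- bump l u x) ^ n) \<longlonglongrightarrow> 0"
    using p by (intro LIMSEQ_power_zero) auto
  then have "(\<lambda>n. 1 - exp (- bump l u x) ^ n) \<longlonglongrightarrow> 1 - 0"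
    by (intro tendsto_diff tendsto_const)
  then show ?thesis using True unfolding eq by simp
next
  case False
  then show ?thesis using bump_zero[OF False] by (simp add: tfn_def)
qed



lemma cont_meas_leb: "continuous_on UNIV f \<Longrightarrow> (f::'a::euclidean_space \<Rightarrow> real) \<in> borel_measurable lebesgue"
  using borel_measurable_continuous_onI measurable_completion measurable_lborel2 by metis

lemma box_leb: "box l u \<in> sets (lebesgue :: 'a::euclidean_space measure)"
  by (rule sets_completionI_sets) simp

lemma ennreal_eq_neg: "ennreal a = ennreal (- a) \<Longrightarrow> a = 0"
proof (rule ccontr)
  assume e: "ennreal a = ennreal (- a)" and "a \<noteq> 0"
  then consider "a > 0" | "a < 0" by linarith
  then show False
  proof cases
    case 1
    then have "ennreal (- a) = 0" by (simp add: ennreal_eq_0_iff)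
    then have "ennreal a = 0" using e by simp
    then show False using 1 by (simp add: ennreal_eq_0_iff)
  next
    case 2
    then have "ennreal a = 0" by (simp add: ennreal_eq_0_iff)
    then have "ennreal (- a) = 0" using e by simp
    then show False using 2 by (simp add: ennreal_eq_0_iff)
  qed
qed

lemma box_zero_AE:
  fixes f :: "'a::euclidean_space \<Rightarrow> real"
  assumes f: "f \<in> borel_measurable lebesgue"
    and int: "\<And>l u. integrable lebesgue (\<lambda>x. indicator (box l u) x * f x)"
    and zero: "\<And>l u. (\<integral>x. indicator (box l u) x * f x \<partial>lebesgue) = 0"
  shows "AE x in lebesgue. f x = 0"
proof -
  obtain g where g[measurable]: "g \<in> borel_measurable lborel" and fg: "AE x in lborel. f x = g x"
    using completion_ex_borel_measurable_real[OF f] by blast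
  have fg': "AE x in lebesgue. f x = g x" using fg by (rule AE_completion)
  have gm: "g \<in> borel_measurable lebesgue" using g measurable_completion by blast
  have gint: "integrable lborel (\<lambda>x. indicator (box l u) x * g x)" for l u :: 'a
  proof -
    have "integrable lebesgue (\<lambda>x. indicator (box l u) x * g x)"
      using int[of l u] by (rule integrable_cong_AE_imp)
        (use fg' gm box_leb in \<open>auto elim: AE_mp intro!: borel_measurable_times borel_measurable_indicator\<close>)
    then show ?thesis by (subst (asm) integrable_completion) auto
  qed
  have gz: "(\<integral>x. indicator (box l u) x * g x \<partial>lborel) = 0" for l u :: 'a
  proof -
    have "(\<integral>x. indicator (box l u) x * g x \<partial>lebesgue) = (\<integral>x. indicator (box l u) x * f x \<partial>lebesgue)"
      by (rule integral_cong_AE)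
        (use fg' gm f box_leb in \<open>auto elim: AE_mp intro!: borel_measurable_times borel_measurable_indicator\<close>)
    then show ?thesis using zero[of l u] by (subst (asm) integral_completion) auto
  qed
  define M1 where "M1 = density lborel (\<lambda>x. ennreal (g x))"
  define M2 where "M2 = density lborel (\<lambda>x. ennreal (- g x))"
  have e1: "emeasure M1 (box l u) = (\<integral>\<^sup>+x. ennreal (indicator (box l u) x * g x) \<partial>lborel)" for l u :: 'a
    unfolding M1_def by (subst emeasure_density) (auto intro!: nn_integral_cong simp: indicator_def)
  have e2: "emeasure M2 (box l u) = (\<integral>\<^sup>+x. ennreal (- (indicator (box l u) x * g x)) \<partial>lborel)" for l u :: 'a
    unfolding M2_def by (subst emeasure_density) (auto intro!: nn_integral_cong simp: indicator_def)
  have fin: "(\<integral>\<^sup>+x. ennreal (h x) \<partial>lborel) < \<infinity>" if "integrable lborel (h::'a \<Rightarrow> real)" for h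
  proof -
    have "(\<integral>\<^sup>+x. ennreal (h x) \<partial>lborel) \<le> (\<integral>\<^sup>+x. ennreal (norm (h x)) \<partial>lborel)"
      by (intro nn_integral_mono) auto
    also have "\<dots> < \<infinity>" using that unfolding integrable_iff_bounded by auto
    finally show ?thesis .
  qed
  have fin1: "emeasure M1 (box l u) < \<infinity>" for l u :: 'a
    unfolding e1 by (rule fin[OF gint])
  have fin2: "emeasure M2 (box l u) < \<infinity>" for l u :: 'a
    unfolding e2 by (rule fin) (use gint[of l u] in \<open>auto\<close>)
  have eq: "emeasure M1 (box l u) = emeasure M2 (box l u)" for l u :: 'a
  proof -
    have "0 = enn2real (emeasure M1 (box l u)) - enn2real (emeasure M2 (box l u))"
      using gz[of l u] real_lebesgue_integral_def[OF gint[of l u]] unfolding e1 e2 by simp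
    then have "enn2real (emeasure M1 (box l u)) = enn2real (emeasure M2 (box l u))" by simp
    then have "ennreal (enn2real (emeasure M1 (box l u))) = ennreal (enn2real (emeasure M2 (box l u)))" by simp
    then show ?thesis using fin1[of l u] fin2[of l u]
      by (auto simp: ennreal_enn2real_if split: if_splits)
  qed
  have "M1 = M2"
  proof (rule measure_eqI_generator_eq)
    let ?E = "range (\<lambda>(a, b). box a b::'a set)"
    show "Int_stable ?E"
      by (auto simp: Int_stable_def box_Int_box)
    show "?E \<subseteq> Pow UNIV" "sets M1 = sigma_sets UNIV ?E" "sets M2 = sigma_sets UNIV ?E"
      by (simp_all add: borel_eq_box M1_def M2_def)
    let ?A = "\<lambda>n::nat. box (- (real n *\<^sub>R One)) (real n *\<^sub>R One) :: 'a set"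
    show "range ?A \<subseteq> ?E" "(\<Union>i. ?A i) = UNIV"
      unfolding UN_box_eq_UNIV by auto
    show "emeasure M1 (?A i) \<noteq> \<infinity>" for i using fin1 by (simp add: less_top)
    show "emeasure M1 X = emeasure M2 X" if "X \<in> ?E" for X
      using that eq by auto
  qed
  then have "AE x in lborel. ennreal (g x) = ennreal (- g x)"
    unfolding M1_def M2_def by (intro sigma_finite_measure.density_unique[OF sigma_finite_lborel]) auto
  then have "AE x in lborel. g x = 0"
    by (rule AE_mp) (auto intro!: AE_I2 ennreal_eq_neg)
  then have "AE x in lebesgue. g x = 0" by (rule AE_completion)
  with fg' show ?thesis by eventually_elim simp
qed

lemma tfn_lim_int:
  fixes f :: "'a::euclidean_space \<Rightarrow> real"
  assumes f: "loc_int f"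
  shows "integrable lebesgue (\<lambda>x. indicator (box l u) x * f x)"
    and "\<And>n. integrable lebesgue (\<lambda>x. f x * tfn n l u x)"
    and "(\<lambda>n. \<integral>x. f x * tfn n l u x \<partial>lebesgue) \<longlonglongrightarrow> (\<integral>x. indicator (box l u) x * f x \<partial>lebesgue)"
proof -
  have fm: "f \<in> borel_measurable lebesgue" using f unfolding loc_int_def by blast
  have fi: "integrable lebesgue (\<lambda>x. indicator (cbox l u) x *\<^sub>R f x)"
    using f unfolding loc_int_def set_integrable_def by (auto simp: compact_cbox)
  have tm: "tfn n l u \<in> borel_measurable lebesgue" for n
    by (rule cont_meas_leb) (rule Ck_cont[OF Ck_tfn[of 0]])
  let ?F = "\<lambda>x. f x * indicator (box l u) x"
  let ?s = "\<lambda>n x. f x * tfn n l u x"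
  let ?w = "\<lambda>x. \<bar>indicator (cbox l u) x *\<^sub>R f x\<bar>"
  have A: "?F \<in> borel_measurable lebesgue" using fm box_leb
    by (intro borel_measurable_times borel_measurable_indicator) auto
  have B: "?s n \<in> borel_measurable lebesgue" for n using fm tm by (intro borel_measurable_times)
  have C: "integrable lebesgue ?w" using fi by (rule integrable_abs)
  have D: "AE x in lebesgue. (\<lambda>n. ?s n x) \<longlonglongrightarrow> ?F x"
    by (intro AE_I2 tendsto_mult tendsto_const tfn_lim)
  have E: "AE x in lebesgue. norm (?s n x) \<le> ?w x" for n
  proof (intro AE_I2)
    fix x
    show "norm (?s n x) \<le> ?w x"
    proof (cases "x \<in> box l u")
      case True
      then have "x \<in> cbox l u" using box_subset_cbox by blast
      then show ?thesis using tfn_bounds[of n l u x]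
        by (simp add: abs_mult mult_left_le)
    next
      case False
      then have "tfn n l u x = 0" using bump_zero[OF False] by (simp add: tfn_def)
      then show ?thesis by simp
    qed
  qed
  have eqF: "(\<lambda>x. indicator (box l u) x * f x) = ?F" by (auto simp: fun_eq_iff)
  show "integrable lebesgue (\<lambda>x. indicator (box l u) x * f x)"
    unfolding eqF by (rule integrable_dominated_convergence[OF A B C D E])
  show "integrable lebesgue (\<lambda>x. f x * tfn n l u x)" for n
    by (rule integrable_dominated_convergence2[OF A B C D E])
  show "(\<lambda>n. \<integral>x. f x * tfn n l u x \<partial>lebesgue) \<longlonglongrightarrow> (\<integral>x. indicator (box l u) x * f x \<partial>lebesgue)"
    unfolding eqF by (rule integral_dominated_convergence[OF A B C D E])
qed

lemma loc_int_diff: "loc_int f \<Longrightarrow> loc_int g \<Longrightarrow> loc_int (\<lambda>x. f x - g x)"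
  unfolding loc_int_def set_integrable_def
  by (auto simp: right_diff_distrib intro!: Bochner_Integration.integrable_diff)

lemma weak_unique:
  fixes f1 f2 :: "'a::euclidean_space \<Rightarrow> real"
  assumes f1: "loc_int f1" and f2: "loc_int f2"
    and eq: "\<And>\<phi>. test_fn \<phi> \<Longrightarrow> (\<integral>x. f1 x * \<phi> x \<partial>lebesgue) = (\<integral>x. f2 x * \<phi> x \<partial>lebesgue)"
  shows "AE x in lebesgue. f1 x = f2 x"
proof -
  let ?f = "\<lambda>x. f1 x - f2 x"
  have f: "loc_int ?f" using loc_int_diff[OF f1 f2] .
  have zero: "(\<integral>x. indicator (box l u) x * ?f x \<partial>lebesgue) = 0" for l u :: 'a
  proof -
    have z: "(\<integral>x. ?f x * tfn n l u x \<partial>lebesgue) = 0" if "n > 0" for n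
    proof -
      have "(\<integral>x. ?f x * tfn n l u x \<partial>lebesgue) = (\<integral>x. f1 x * tfn n l u x - f2 x * tfn n l u x \<partial>lebesgue)"
        by (simp add: left_diff_distrib)
      also have "\<dots> = (\<integral>x. f1 x * tfn n l u x \<partial>lebesgue) - (\<integral>x. f2 x * tfn n l u x \<partial>lebesgue)"
        by (rule Bochner_Integration.integral_diff) (use tfn_lim_int(2)[OF f1] tfn_lim_int(2)[OF f2] in auto)
      also have "\<dots> = 0" using eq[OF test_tfn[OF that]] by simp
      finally show ?thesis .
    qed
    have "(\<lambda>n. \<integral>x. ?f x * tfn n l u x \<partial>lebesgue) \<longlonglongrightarrow> 0"
    proof (rule tendsto_eventually)
      show "\<forall>\<^sub>F n in sequentially. (\<integral>x. ?f x * tfn n l u x \<partial>lebesgue) = 0"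
        using eventually_gt_at_top[of 0] by (rule eventually_mono) (rule z)
    qed
    from LIMSEQ_unique[OF tfn_lim_int(3)[OF f] this] show ?thesis .
  qed
  have "AE x in lebesgue. ?f x = 0"
    by (rule box_zero_AE) (use f tfn_lim_int(1)[OF f] zero in \<open>auto simp: loc_int_def\<close>)
  then show ?thesis by eventually_elim simp
qed



lemma leb_scale:
  assumes m: "m \<noteq> 0"
  shows "(lebesgue :: 'a::euclidean_space measure) =
    density (distr lebesgue lebesgue (\<lambda>x. m *\<^sub>R x)) (\<lambda>_. ennreal (\<bar>m\<bar> ^ DIM('a)))"
proof -
  have T: "(\<lambda>x::'a. 0 + (\<Sum>j\<in>Basis. (m * (x \<bullet> j)) *\<^sub>R j)) = (\<lambda>x. m *\<^sub>R x)"
    unfolding scaleR_scaleR[symmetric] scaleR_sum_right[symmetric] euclidean_representation by simp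
  show ?thesis
    using lebesgue_affine_euclidean(1)[of "\<lambda>_::'a. m" "0::'a"] m unfolding T by (simp add: prod_constant)
qed

lemma scale_meas: "(\<lambda>x::'a::euclidean_space. m *\<^sub>R x) \<in> lebesgue \<rightarrow>\<^sub>M lebesgue"
  using lebesgue_measurable_scaling by (simp add: fun_eq_iff)

lemma meas_scale_iff:
  fixes F :: "'a::euclidean_space \<Rightarrow> real"
  assumes m: "m \<noteq> 0"
  shows "(\<lambda>x. F (m *\<^sub>R x)) \<in> borel_measurable lebesgue \<longleftrightarrow> F \<in> borel_measurable lebesgue"
proof
  assume "F \<in> borel_measurable lebesgue"
  then show "(\<lambda>x. F (m *\<^sub>R x)) \<in> borel_measurable lebesgue"
    using measurable_compose[OF scale_meas] by blast
next
  assume "(\<lambda>x. F (m *\<^sub>R x)) \<in> borel_measurable lebesgue"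
  from measurable_compose[OF scale_meas[of "1/m"] this] show "F \<in> borel_measurable lebesgue"
    using m by simp
qed

lemma NN_scale:
  fixes F :: "'a::euclidean_space \<Rightarrow> ennreal"
  assumes F: "F \<in> borel_measurable lebesgue" and m: "m \<noteq> 0"
  shows "(\<integral>\<^sup>+x. F x \<partial>lebesgue) = ennreal (\<bar>m\<bar> ^ DIM('a)) * (\<integral>\<^sup>+x. F (m *\<^sub>R x) \<partial>lebesgue)"
proof -
  have "(\<integral>\<^sup>+x. F x \<partial>lebesgue) = (\<integral>\<^sup>+x. F x \<partial>density (distr lebesgue lebesgue (\<lambda>x. m *\<^sub>R x)) (\<lambda>_. ennreal (\<bar>m\<bar> ^ DIM('a))))"
    by (rule arg_cong[where f="\<lambda>M. integral\<^sup>N M F", OF leb_scale[OF m]])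
  also have "\<dots> = (\<integral>\<^sup>+x. ennreal (\<bar>m\<bar> ^ DIM('a)) * F x \<partial>distr lebesgue lebesgue (\<lambda>x. m *\<^sub>R x))"
    by (subst nn_integral_density) (use F in auto)
  also have "\<dots> = ennreal (\<bar>m\<bar> ^ DIM('a)) * (\<integral>\<^sup>+x. F x \<partial>distr lebesgue lebesgue (\<lambda>x. m *\<^sub>R x))"
    by (rule nn_integral_cmult) (use F in auto)
  also have "(\<integral>\<^sup>+x. F x \<partial>distr lebesgue lebesgue (\<lambda>x. m *\<^sub>R x)) = (\<integral>\<^sup>+x. F (m *\<^sub>R x) \<partial>lebesgue)"
    by (rule nn_integral_distr[OF scale_meas]) (use F in auto)
  finally show ?thesis .
qed

lemma integrable_scale_iff:
  fixes F :: "'a::euclidean_space \<Rightarrow> real"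
  assumes m: "m \<noteq> 0"
  shows "integrable lebesgue (\<lambda>x. F (m *\<^sub>R x)) \<longleftrightarrow> integrable lebesgue F"
proof (cases "F \<in> borel_measurable lebesgue")
  case True
  have n: "(\<lambda>x. ennreal (norm (F x))) \<in> borel_measurable lebesgue" using True by measurable
  have "(\<integral>\<^sup>+x. ennreal (norm (F x)) \<partial>lebesgue) = ennreal (\<bar>m\<bar> ^ DIM('a)) * (\<integral>\<^sup>+x. ennreal (norm (F (m *\<^sub>R x))) \<partial>lebesgue)"
    using NN_scale[OF n m] by simp
  moreover have "ennreal (\<bar>m\<bar> ^ DIM('a)) \<noteq> 0" "ennreal (\<bar>m\<bar> ^ DIM('a)) \<noteq> \<infinity>" using m by auto
  ultimately have "(\<integral>\<^sup>+x. ennreal (norm (F x)) \<partial>lebesgue) < \<infinity> \<longleftrightarrow> (\<integral>\<^sup>+x. ennreal (norm (F (m *\<^sub>R x))) \<partial>lebesgue) < \<infinity>"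
    by (auto simp: ennreal_mult_less_top less_top)
  then show ?thesis unfolding integrable_iff_bounded using True meas_scale_iff[OF m, of F] by auto
next
  case False
  then show ?thesis using meas_scale_iff[OF m, of F] borel_measurable_integrable by blast
qed

lemma INT_scale:
  fixes F :: "'a::euclidean_space \<Rightarrow> real"
  assumes m: "m \<noteq> 0"
  shows "(\<integral>x. F x \<partial>lebesgue) = \<bar>m\<bar> ^ DIM('a) * (\<integral>x. F (m *\<^sub>R x) \<partial>lebesgue)"
proof (cases "F \<in> borel_measurable lebesgue")
  case True
  have "(\<integral>x. F x \<partial>lebesgue) = (\<integral>x. F x \<partial>density (distr lebesgue lebesgue (\<lambda>x. m *\<^sub>R x)) (\<lambda>_. ennreal (\<bar>m\<bar> ^ DIM('a))))"
    by (rule arg_cong[where f="\<lambda>M. integral\<^sup>L M F", OF leb_scale[OF m]])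
  also have "\<dots> = (\<integral>x. \<bar>m\<bar> ^ DIM('a) *\<^sub>R F x \<partial>distr lebesgue lebesgue (\<lambda>x. m *\<^sub>R x))"
    by (rule integral_density) (use True in auto)
  also have "\<dots> = \<bar>m\<bar> ^ DIM('a) * (\<integral>x. F x \<partial>distr lebesgue lebesgue (\<lambda>x. m *\<^sub>R x))"
    by simp
  also have "(\<integral>x. F x \<partial>distr lebesgue lebesgue (\<lambda>x. m *\<^sub>R x)) = (\<integral>x. F (m *\<^sub>R x) \<partial>lebesgue)"
    by (rule integral_distr[OF scale_meas]) (use True in auto)
  finally show ?thesis .
next
  case False
  then have "\<not> integrable lebesgue F" "\<not> integrable lebesgue (\<lambda>x. F (m *\<^sub>R x))"
    using meas_scale_iff[OF m, of F] borel_measurable_integrable by blast+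
  then show ?thesis by (simp add: not_integrable_integral_eq)
qed

lemma Lpow_scale:
  fixes h :: "'a::euclidean_space \<Rightarrow> real"
  assumes h: "h \<in> borel_measurable lebesgue" and m: "m \<noteq> 0" and c: "c \<ge> 0"
  shows "Lpow r (\<lambda>x. c * h (m *\<^sub>R x)) = ennreal (c powr r / \<bar>m\<bar> ^ DIM('a)) * Lpow r h"
proof -
  let ?X = "\<integral>\<^sup>+x. ennreal (\<bar>h (m *\<^sub>R x)\<bar> powr r) \<partial>lebesgue"
  have hm: "(\<lambda>x. ennreal (\<bar>h x\<bar> powr r)) \<in> borel_measurable lebesgue" using h by measurable
  have L: "Lpow r h = ennreal (\<bar>m\<bar> ^ DIM('a)) * ?X"
    unfolding Lpow_def using NN_scale[OF hm m] by simp
  have "Lpow r (\<lambda>x. c * h (m *\<^sub>R x)) = (\<integral>\<^sup>+x. ennreal (c powr r) * ennreal (\<bar>h (m *\<^sub>R x)\<bar> powr r) \<partial>lebesgue)"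
    unfolding Lpow_def
    by (intro nn_integral_cong) (use c in \<open>simp add: abs_mult powr_mult ennreal_mult\<close>)
  also have "\<dots> = ennreal (c powr r) * ?X"
    by (rule nn_integral_cmult) (use h m in \<open>measurable\<close>)
  also have "\<dots> = ennreal (c powr r / \<bar>m\<bar> ^ DIM('a)) * (ennreal (\<bar>m\<bar> ^ DIM('a)) * ?X)"
  proof -
    have "ennreal (c powr r / \<bar>m\<bar> ^ DIM('a)) * ennreal (\<bar>m\<bar> ^ DIM('a)) = ennreal (c powr r)"
      using m by (subst ennreal_mult[symmetric]) auto
    then show ?thesis by (simp add: mult.assoc[symmetric])
  qed
  finally show ?thesis unfolding L .
qed



lemma INT_scale':
  fixes F :: "'a::euclidean_space \<Rightarrow> real"
  assumes m: "m \<noteq> 0"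
  shows "(\<integral>x. F (m *\<^sub>R x) \<partial>lebesgue) = (\<integral>x. F x \<partial>lebesgue) / \<bar>m\<bar> ^ DIM('a)"
  using INT_scale[OF m, of F] m by simp

lemma loc_int_scale:
  fixes f :: "'a::euclidean_space \<Rightarrow> real"
  assumes f: "loc_int f" and m: "m \<noteq> 0"
  shows "loc_int (\<lambda>x. c * f (m *\<^sub>R x))"
  unfolding loc_int_def
proof (intro conjI allI impI)
  have "f \<in> borel_measurable lebesgue" using f unfolding loc_int_def by blast
  then have "(\<lambda>x. f (m *\<^sub>R x)) \<in> borel_measurable lebesgue" using meas_scale_iff[OF m] by blast
  then show "(\<lambda>x. c * f (m *\<^sub>R x)) \<in> borel_measurable lebesgue" by measurable
  fix K :: "'a set" assume K: "compact K"
  let ?K' = "(\<lambda>x. m *\<^sub>R x) ` K"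
  have "compact ?K'" using compact_scaling[OF K] .
  then have "integrable lebesgue (\<lambda>y. indicator ?K' y *\<^sub>R f y)"
    using f unfolding loc_int_def set_integrable_def by blast
  then have "integrable lebesgue (\<lambda>x. indicator ?K' (m *\<^sub>R x) *\<^sub>R f (m *\<^sub>R x))"
    using integrable_scale_iff[OF m, of "\<lambda>y. indicator ?K' y *\<^sub>R f y"] by simp
  then have "integrable lebesgue (\<lambda>x. c * (indicator ?K' (m *\<^sub>R x) *\<^sub>R f (m *\<^sub>R x)))"
    by (rule integrable_mult_right)
  moreover have "indicator ?K' (m *\<^sub>R x) = (indicator K x :: real)" for x
    using m by (auto simp: indicator_def)
  ultimately show "set_integrable lebesgue K (\<lambda>x. c * f (m *\<^sub>R x))"
    unfolding set_integrable_def by (simp add: mult.left_commute)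
qed

lemma test_scale:
  fixes \<psi> :: "'a::euclidean_space \<Rightarrow> real"
  assumes t: "test_fn \<psi>" and m: "m \<noteq> 0"
  shows "test_fn (\<lambda>y. \<psi> (m *\<^sub>R y))"
  unfolding test_fn_def
proof (intro conjI allI)
  show "Ck k (\<lambda>y. \<psi> (m *\<^sub>R y))" for k using t unfolding test_fn_def by (blast intro: Ck_scale)
  have eq: "{y. \<psi> (m *\<^sub>R y) \<noteq> 0} = (\<lambda>x. (1/m) *\<^sub>R x) ` {x. \<psi> x \<noteq> 0}"
  proof
    show "{y. \<psi> (m *\<^sub>R y) \<noteq> 0} \<subseteq> (\<lambda>x. (1/m) *\<^sub>R x) ` {x. \<psi> x \<noteq> 0}"
    proof
      fix y assume "y \<in> {y. \<psi> (m *\<^sub>R y) \<noteq> 0}"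
      then show "y \<in> (\<lambda>x. (1/m) *\<^sub>R x) ` {x. \<psi> x \<noteq> 0}"
        using m by (intro image_eqI[of _ _ "m *\<^sub>R y"]) auto
    qed
    show "(\<lambda>x. (1/m) *\<^sub>R x) ` {x. \<psi> x \<noteq> 0} \<subseteq> {y. \<psi> (m *\<^sub>R y) \<noteq> 0}"
      using m by auto
  qed
  have "compact ((\<lambda>x. (1/m) *\<^sub>R x) ` closure {x. \<psi> x \<noteq> 0})"
    using t unfolding test_fn_def by (intro compact_scaling) blast
  also have "(\<lambda>x. (1/m) *\<^sub>R x) ` closure {x. \<psi> x \<noteq> 0} = closure ((\<lambda>x. (1/m) *\<^sub>R x) ` {x. \<psi> x \<noteq> 0})"
    using closure_scaleR[of "1/m" "{x. \<psi> x \<noteq> 0}"] by simp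
  finally show "compact (closure {y. \<psi> (m *\<^sub>R y) \<noteq> 0})" unfolding eq .
qed

lemma fd_scale:
  fixes \<phi> :: "'a::euclidean_space \<Rightarrow> real"
  assumes t: "test_fn \<phi>"
  shows "frechet_derivative (\<lambda>x. \<phi> (m *\<^sub>R x)) (at x) b = m * frechet_derivative \<phi> (at (m *\<^sub>R x)) b"
proof -
  have "Ck (Suc 0) \<phi>" using t unfolding test_fn_def by blast
  then obtain D where D: "\<forall>x. (\<phi> has_derivative D x) (at x)" by auto
  have g: "((\<lambda>x. m *\<^sub>R x) has_derivative (\<lambda>v. m *\<^sub>R v)) (at x)"
    by (rule bounded_linear_imp_has_derivative[OF bounded_linear_scaleR_right])
  have "(\<phi> has_derivative D (m *\<^sub>R x)) (at (m *\<^sub>R x))" using D by blast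
  from has_derivative_compose[OF g this]
  have "((\<lambda>x. \<phi> (m *\<^sub>R x)) has_derivative (\<lambda>v. D (m *\<^sub>R x) (m *\<^sub>R v))) (at x)" .
  then have e1: "frechet_derivative (\<lambda>x. \<phi> (m *\<^sub>R x)) (at x) = (\<lambda>v. D (m *\<^sub>R x) (m *\<^sub>R v))"
    by (rule frechet_derivative_at[symmetric])
  have e2: "frechet_derivative \<phi> (at (m *\<^sub>R x)) = D (m *\<^sub>R x)"
    using D frechet_derivative_at by metis
  have "linear (D (m *\<^sub>R x))" using D has_derivative_linear by blast
  from linear_scale[OF this, of m b] show ?thesis unfolding e1 e2 by simp
qed

lemma weak_scale:
  fixes h k :: "'a::euclidean_space \<Rightarrow> real"
  assumes w: "weak_partial h b k" and m: "m \<noteq> 0"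
  shows "weak_partial (\<lambda>x. c * h (m *\<^sub>R x)) b (\<lambda>x. (c * m) * k (m *\<^sub>R x))"
  unfolding weak_partial_def
proof (intro conjI allI impI)
  have h: "loc_int h" and k: "loc_int k"
    and eq: "\<And>\<phi>. test_fn \<phi> \<Longrightarrow> (\<integral>x. h x * frechet_derivative \<phi> (at x) b \<partial>lebesgue) = - (\<integral>x. k x * \<phi> x \<partial>lebesgue)"
    using w unfolding weak_partial_def by auto
  show "loc_int (\<lambda>x. c * h (m *\<^sub>R x))" using loc_int_scale[OF h m] .
  show "loc_int (\<lambda>x. (c * m) * k (m *\<^sub>R x))" using loc_int_scale[OF k m] .
  fix \<psi> :: "'a \<Rightarrow> real" assume t: "test_fn \<psi>"
  define \<phi> where "\<phi> = (\<lambda>y. \<psi> ((1/m) *\<^sub>R y))"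
  have tp: "test_fn \<phi>" unfolding \<phi>_def by (rule test_scale[OF t]) (use m in simp)
  have psi: "\<psi> = (\<lambda>x. \<phi> (m *\<^sub>R x))" unfolding \<phi>_def using m by (simp add: fun_eq_iff)
  have "(\<integral>x. c * h (m *\<^sub>R x) * frechet_derivative \<psi> (at x) b \<partial>lebesgue)
      = (\<integral>x. (c * m) * (h (m *\<^sub>R x) * frechet_derivative \<phi> (at (m *\<^sub>R x)) b) \<partial>lebesgue)"
    unfolding psi fd_scale[OF tp] by (simp add: ac_simps)
  also have "\<dots> = (c * m) * (\<integral>x. h (m *\<^sub>R x) * frechet_derivative \<phi> (at (m *\<^sub>R x)) b \<partial>lebesgue)"
    by simp
  also have "(\<integral>x. h (m *\<^sub>R x) * frechet_derivative \<phi> (at (m *\<^sub>R x)) b \<partial>lebesgue)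
     = (\<integral>x. h x * frechet_derivative \<phi> (at x) b \<partial>lebesgue) / \<bar>m\<bar> ^ DIM('a)"
    using INT_scale'[OF m, of "\<lambda>x. h x * frechet_derivative \<phi> (at x) b"] by simp
  also have "\<dots> = - (\<integral>x. k x * \<phi> x \<partial>lebesgue) / \<bar>m\<bar> ^ DIM('a)"
    using eq[OF tp] by simp
  also have "- (\<integral>x. k x * \<phi> x \<partial>lebesgue) / \<bar>m\<bar> ^ DIM('a) = - (\<integral>x. k (m *\<^sub>R x) * \<phi> (m *\<^sub>R x) \<partial>lebesgue)"
    using INT_scale'[OF m, of "\<lambda>x. k x * \<phi> x"] by simp
  finally show "(\<integral>x. c * h (m *\<^sub>R x) * frechet_derivative \<psi> (at x) b \<partial>lebesgue) =
      - (\<integral>x. c * m * k (m *\<^sub>R x) * \<psi> x \<partial>lebesgue)"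
    unfolding psi by (simp add: ac_simps)
qed

lemma memLp_scale:
  fixes h :: "'a::euclidean_space \<Rightarrow> real"
  assumes h: "memLp r h" and m: "m \<noteq> 0" and c: "c \<ge> 0"
  shows "memLp r (\<lambda>x. c * h (m *\<^sub>R x))"
proof -
  have hm: "h \<in> borel_measurable lebesgue" using h unfolding memLp_def by blast
  then have "(\<lambda>x. h (m *\<^sub>R x)) \<in> borel_measurable lebesgue" using meas_scale_iff[OF m] by blast
  then have "(\<lambda>x. c * h (m *\<^sub>R x)) \<in> borel_measurable lebesgue" by measurable
  moreover have "Lpow r (\<lambda>x. c * h (m *\<^sub>R x)) < \<infinity>"
    unfolding Lpow_scale[OF hm m c] using h unfolding memLp_def by (simp add: ennreal_mult_less_top)
  ultimately show ?thesis unfolding memLp_def by blast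
qed

lemma grad_scale:
  fixes h :: "'a::euclidean_space \<Rightarrow> real"
  assumes H: "H1 h" and m: "m > 0" and c: "c > 0"
  shows "H1 (\<lambda>x. c * h (m *\<^sub>R x)) \<and>
         grad_sq (\<lambda>x. c * h (m *\<^sub>R x)) = ennreal ((c * m) powr 2 / m ^ DIM('a)) * grad_sq h"
proof -
  let ?g = "\<lambda>x. c * h (m *\<^sub>R x)"
  let ?A = "(c * m) powr 2 / m ^ DIM('a)"
  have m0: "m \<noteq> 0" using m by simp
  define K where "K b = (SOME k. weak_partial h b k \<and> memLp 2 k)" for b
  have K: "weak_partial h b (K b) \<and> memLp 2 (K b)" if "b \<in> Basis" for b
    unfolding K_def by (rule someI_ex[of "\<lambda>k. weak_partial h b k \<and> memLp 2 k"]) (use H that in \<open>auto simp: H1_def\<close>)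
  define KG where "KG b = (\<lambda>x. (c * m) * K b (m *\<^sub>R x))" for b
  have KG: "weak_partial ?g b (KG b) \<and> memLp 2 (KG b)" if "b \<in> Basis" for b
    unfolding KG_def using weak_scale[OF conjunct1[OF K[OF that]] m0, of c]
      memLp_scale[OF conjunct2[OF K[OF that]] m0, of "c * m"] c m by simp
  have memg: "memLp 2 ?g" using memLp_scale[of 2 h m c] H m0 c unfolding H1_def by simp
  have H1g: "H1 ?g" unfolding H1_def using memg KG by blast
  have S: "Lpow 2 (SOME k. weak_partial ?g b k \<and> memLp 2 k) = ennreal ?A * Lpow 2 (K b)" if b: "b \<in> Basis" for b
  proof -
    define k' where "k' = (SOME k. weak_partial ?g b k \<and> memLp 2 k)"
    have k': "weak_partial ?g b k' \<and> memLp 2 k'"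
      unfolding k'_def by (rule someI_ex[of "\<lambda>k. weak_partial ?g b k \<and> memLp 2 k"]) (use KG[OF b] in blast)
    have ae: "AE x in lebesgue. k' x = KG b x"
    proof (rule weak_unique)
      show "loc_int k'" "loc_int (KG b)" using k' KG[OF b] unfolding weak_partial_def by auto
      fix \<phi> :: "'a \<Rightarrow> real" assume "test_fn \<phi>"
      then show "(\<integral>x. k' x * \<phi> x \<partial>lebesgue) = (\<integral>x. KG b x * \<phi> x \<partial>lebesgue)"
        using k' KG[OF b] unfolding weak_partial_def by (metis neg_equal_iff_equal)
    qed
    have "Lpow 2 k' = Lpow 2 (KG b)"
      unfolding Lpow_def by (rule nn_integral_cong_AE) (use ae in \<open>auto elim: AE_mp\<close>)
    also have "\<dots> = ennreal ?A * Lpow 2 (K b)"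
      unfolding KG_def using Lpow_scale[of "K b" m "c * m" 2] K[OF b] m c unfolding memLp_def by simp
    finally show ?thesis unfolding k'_def .
  qed
  have "grad_sq ?g = (\<Sum>b\<in>Basis. ennreal ?A * Lpow 2 (K b))"
    unfolding grad_sq_def using H1g S by simp
  also have "\<dots> = ennreal ?A * grad_sq h"
    unfolding grad_sq_def K_def using H by (simp add: sum_distrib_left)
  finally show ?thesis using H1g by blast
qed



lemma bern:
  fixes s \<beta> :: real
  assumes s: "s > 0" and b: "\<beta> > 0"
  shows "\<beta> + 1 \<le> \<beta> * s + s powr (- \<beta>)"
proof -
  have "1 + (- \<beta> * ln s) \<le> exp (- \<beta> * ln s)" by (rule exp_ge_add_one_self)
  also have "exp (- \<beta> * ln s) = s powr (- \<beta>)" using s by (simp add: powr_def)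
  finally have A: "1 - \<beta> * ln s \<le> s powr (- \<beta>)" by simp
  have "ln s \<le> s - 1" using s by (rule ln_le_minus_one)
  then have "\<beta> * ln s \<le> \<beta> * (s - 1)" using b by (simp add: mult_left_mono)
  with A show ?thesis by (simp add: algebra_simps)
qed

lemma Lnorm_one:
  assumes h: "memLp r h" and r: "r > 0" and n: "Lnorm r h = 1"
  shows "Lpow r h = 1"
proof -
  have fin: "Lpow r h < \<infinity>" using h unfolding memLp_def by blast
  let ?x = "enn2real (Lpow r h)"
  have x0: "?x \<ge> 0" by simp
  have e: "?x powr (1 / r) = 1" using n unfolding Lnorm_def .
  then have "?x \<noteq> 0" by auto
  then have "ln (?x powr (1/r)) = (1/r) * ln ?x" using x0 by (simp add: ln_powr)
  with e have "(1/r) * ln ?x = 0" by simp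
  then have "ln ?x = 0" using r by simp
  then have "?x = 1" using \<open>?x \<noteq> 0\<close> x0 by simp
  have "Lpow r h = ennreal (enn2real (Lpow r h))" using fin by simp
  also have "\<dots> = 1" using \<open>?x = 1\<close> by simp
  finally show ?thesis .
qed

lemma Lnorm_of:
  assumes "Lpow r h = 1"
  shows "Lnorm r h = 1"
  using assms unfolding Lnorm_def by simp

lemma Lpow2_pos:
  fixes h :: "'a::euclidean_space \<Rightarrow> real"
  assumes h: "memLp (2*p) h" and p: "p > 0" and one: "Lpow (2*p) h = 1"
  shows "Lpow 2 h \<noteq> 0"
proof
  assume z: "Lpow 2 h = 0"
  have hm: "h \<in> borel_measurable lebesgue" using h unfolding memLp_def by blast
  have "AE x in lebesgue. ennreal (\<bar>h x\<bar> powr 2) = 0"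
    using z unfolding Lpow_def by (subst (asm) nn_integral_0_iff_AE) (use hm in measurable)
  then have ae: "AE x in lebesgue. h x = 0"
    by (rule AE_mp) (auto intro!: AE_I2 simp: ennreal_eq_0_iff)
  have "AE x in lebesgue. ennreal (\<bar>h x\<bar> powr (2*p)) = 0"
    using ae by (rule AE_mp) (auto intro!: AE_I2)
  then have "Lpow (2*p) h = 0"
    unfolding Lpow_def by (subst nn_integral_0_iff_AE) (use hm in measurable)
  then show False using one by simp
qed

lemma expo:
  fixes p s d :: real
  assumes p: "p > 1" and s: "s > 0" and d: "d > 0"
  defines "q \<equiv> p / (p - 1)"
  shows "(s powr (q/(2*p))) powr 2 / (s powr (q/d)) powr d * s = 1"
    and "(s powr (q/(2*p))) powr (2*p) / (s powr (q/d)) powr d = 1"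
    and "(s powr (q/(2*p)) * s powr (q/d)) powr 2 / (s powr (q/d)) powr d = s powr (2*q/d - 1)"
proof -
  have qp: "q/p - q + 1 = 0" using p unfolding q_def by (simp add: field_simps)
  have D: "(s powr (q/d)) powr d = s powr q" using d by (simp add: powr_powr)
  have C2: "(s powr (q/(2*p))) powr 2 = s powr (q/p)" using p by (simp add: powr_powr)
  have C2p: "(s powr (q/(2*p))) powr (2*p) = s powr q" using p by (simp add: powr_powr)
  show "(s powr (q/(2*p))) powr 2 / (s powr (q/d)) powr d * s = 1"
  proof -
    have "(s powr (q/(2*p))) powr 2 / (s powr (q/d)) powr d * s = s powr (q/p - q + 1)"
      unfolding D C2 using s by (simp add: powr_diff powr_add)
    then show ?thesis unfolding qp using s by simp
  qed
  show "(s powr (q/(2*p))) powr (2*p) / (s powr (q/d)) powr d = 1"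
    unfolding D C2p using s by simp
  have "(s powr (q/(2*p)) * s powr (q/d)) powr 2 = s powr (q/p) * s powr (2*q/d)"
    using s d by (simp add: powr_mult powr_powr C2 mult.commute)
  then have "(s powr (q/(2*p)) * s powr (q/d)) powr 2 / (s powr (q/d)) powr d = s powr (q/p + 2*q/d - q)"
    unfolding D using s by (simp add: powr_diff powr_add)
  also have "q/p + 2*q/d - q = 2*q/d - 1" using qp by simp
  finally show "(s powr (q/(2*p)) * s powr (q/d)) powr 2 / (s powr (q/d)) powr d = s powr (2*q/d - 1)" .
qed

lemma key:
  fixes h :: "'a::euclidean_space \<Rightarrow> real"
  assumes p: "p > 1" and hm: "memLp (2*p) h" and hn: "Lnorm (2*p) h = 1"
    and s: "Lpow 2 h = ennreal s" "s > 0"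
  shows "chi p TYPE('a) \<le> ennreal (s powr (2*(p/(p-1))/DIM('a) - 1)) * (grad_sq h / 2)"
proof (cases "H1 h")
  case False
  then have "grad_sq h = \<infinity>" unfolding grad_sq_def by simp
  moreover have "s powr (2*(p/(p-1))/DIM('a) - 1) > 0" using s by simp
  ultimately show ?thesis by (simp add: ennreal_mult_top divide_ennreal_def)
next
  case True
  define q where "q = p/(p-1)"
  define d where "d = real DIM('a)"
  have d: "d > 0" unfolding d_def by simp
  define \<mu> where "\<mu> = s powr (q/d)"
  define c where "c = s powr (q/(2*p))"
  have mu: "\<mu> > 0" unfolding \<mu>_def using s by simp
  have c: "c > 0" unfolding c_def using s by simp
  have muD: "\<mu> ^ DIM('a) = \<mu> powr d" unfolding d_def using mu by (simp add: powr_realpow)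
  have E1: "c powr 2 / \<mu> powr d * s = 1"
    unfolding c_def \<mu>_def q_def by (rule expo(1)[OF p s(2) d])
  have E2: "c powr (2*p) / \<mu> powr d = 1"
    unfolding c_def \<mu>_def q_def by (rule expo(2)[OF p s(2) d])
  have E3: "(c * \<mu>) powr 2 / \<mu> powr d = s powr (2*q/d - 1)"
    unfolding c_def \<mu>_def q_def by (rule expo(3)[OF p s(2) d])
  have E: "c powr 2 / \<mu> ^ DIM('a) * s = 1" "c powr (2*p) / \<mu> ^ DIM('a) = 1"
    "(c * \<mu>) powr 2 / \<mu> ^ DIM('a) = s powr (2*q/d - 1)"
    using E1 E2 E3 unfolding muD by auto
  let ?g = "\<lambda>x. c * h (\<mu> *\<^sub>R x)"
  have hmeas: "h \<in> borel_measurable lebesgue" using hm unfolding memLp_def by blast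
  have h2: "memLp 2 h" using True unfolding H1_def by blast
  have mu0: "\<mu> \<noteq> 0" using mu by simp
  have one: "Lpow (2*p) h = 1" using Lnorm_one[OF hm _ hn] p by simp
  have g2: "memLp 2 ?g" using memLp_scale[OF h2 mu0] c by simp
  have g2p: "memLp (2*p) ?g" using memLp_scale[OF hm mu0] c by simp
  have "Lpow 2 ?g = ennreal (c powr 2 / \<bar>\<mu>\<bar> ^ DIM('a)) * ennreal s"
    using Lpow_scale[OF hmeas mu0, of c 2] c s by simp
  also have "\<dots> = ennreal (c powr 2 / \<mu> ^ DIM('a) * s)"
    using mu s by (subst ennreal_mult) auto
  also have "\<dots> = 1" using E(1) by (simp only: ennreal_1)
  finally have n2: "Lnorm 2 ?g = 1" by (rule Lnorm_of)
  have "Lpow (2*p) ?g = ennreal (c powr (2*p) / \<bar>\<mu>\<bar> ^ DIM('a)) * 1"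
    using Lpow_scale[OF hmeas mu0, of c "2*p"] c one by simp
  also have "\<dots> = 1" using E(2) mu c by simp
  finally have n2p: "Lnorm (2*p) ?g = 1" by (rule Lnorm_of)
  have "chi p TYPE('a) \<le> grad_sq ?g / 2"
    unfolding chi_def using g2 g2p n2 n2p by (intro INF_lower) auto
  also have "grad_sq ?g = ennreal ((c * \<mu>) powr 2 / \<mu> ^ DIM('a)) * grad_sq h"
    using grad_scale[OF True mu c] by blast
  also have "\<dots> = ennreal (s powr (2*(p/(p-1))/DIM('a) - 1)) * grad_sq h"
    using E(3) unfolding q_def d_def by simp
  finally show ?thesis by (simp add: divide_ennreal_def mult.assoc)
qed


lemma rho_le_chi:
  fixes p a :: real
  assumes a: "a > 0"
  shows "rho p a TYPE('a::euclidean_space) \<le> ennreal a + chi p TYPE('a)"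
proof -
  have "rho p a TYPE('a) - ennreal a \<le> chi p TYPE('a)"
    unfolding chi_def
  proof (rule INF_greatest)
    fix g :: "'a \<Rightarrow> real"
    assume "g \<in> {g. memLp 2 g \<and> memLp (2*p) g \<and> Lnorm 2 g = 1 \<and> Lnorm (2*p) g = 1}"
    then have g: "memLp 2 g" "memLp (2*p) g" "Lnorm 2 g = 1" "Lnorm (2*p) g = 1" by auto
    have L: "Lpow 2 g = 1" using Lnorm_one[OF g(1) _ g(3)] by simp
    have "rho p a TYPE('a) \<le> ennreal a * Lpow 2 g + grad_sq g / 2"
      unfolding rho_def by (rule INF_lower) (use g in auto)
    then show "rho p a TYPE('a) - ennreal a \<le> grad_sq g / 2"
      using L by (simp add: ennreal_minus_le_iff)
  qed
  then show ?thesis by (simp add: ennreal_minus_le_iff)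
qed

lemma rho_ge:
  fixes p \<beta> ch :: real
  assumes p: "p > 1" and b: "\<beta> > 0" and bdef: "\<beta> = 2*(p/(p-1))/DIM('a) - 1"
    and C: "chi p TYPE('a::euclidean_space) = ennreal ch" and chi: "ch > 0"
  shows "ennreal (\<beta>*ch + ch) \<le> rho p (\<beta>*ch) TYPE('a)"
  unfolding rho_def
proof (rule INF_greatest)
  fix h :: "'a \<Rightarrow> real"
  assume "h \<in> {h. memLp (2*p) h \<and> Lnorm (2*p) h = 1}"
  then have hm: "memLp (2*p) h" and hn: "Lnorm (2*p) h = 1" by auto
  have a: "\<beta>*ch > 0" using b chi by simp
  show "ennreal (\<beta>*ch + ch) \<le> ennreal (\<beta>*ch) * Lpow 2 h + grad_sq h / 2"
  proof (cases "Lpow 2 h")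
    case top
    have "ennreal (\<beta>*ch) \<noteq> 0" using b chi by simp
    then have "ennreal (\<beta>*ch) * Lpow 2 h = top" using top by simp
    then show ?thesis by simp
  next
    case (real s)
    note L = real
    have one: "Lpow (2*p) h = 1" using Lnorm_one[OF hm _ hn] p by simp
    have "Lpow 2 h \<noteq> 0" using Lpow2_pos[OF hm _ one] p by simp
    then have s: "s > 0" using real by auto
    have K: "ennreal ch \<le> ennreal (s powr \<beta>) * (grad_sq h / 2)"
      using key[OF p hm hn real(2) s] C bdef by simp
    show ?thesis
    proof (cases "grad_sq h / 2")
      case top
      then show ?thesis by simp
    next
      case (real \<gamma>)
      note g = real
      have "ennreal ch \<le> ennreal (s powr \<beta> * \<gamma>)"
        using K g by (simp add: ennreal_mult)
      then have c1: "ch \<le> s powr \<beta> * \<gamma>" using g s by simp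
      have "ch * s powr (- \<beta>) \<le> s powr \<beta> * \<gamma> * s powr (- \<beta>)"
        using c1 s by (intro mult_right_mono) auto
      also have "\<dots> = \<gamma>" using s by (simp add: powr_minus field_simps)
      finally have c2: "ch * s powr (- \<beta>) \<le> \<gamma>" .
      have "ch * (\<beta> + 1) \<le> ch * (\<beta> * s + s powr (- \<beta>))"
        using bern[OF s b] chi by (intro mult_left_mono) auto
      then have c3: "\<beta>*ch + ch \<le> \<beta>*ch * s + \<gamma>" using c2 by (simp add: algebra_simps)
      have "ennreal (\<beta>*ch) * Lpow 2 h + grad_sq h / 2 = ennreal (\<beta>*ch * s + \<gamma>)"
        using L g a s by (simp add: ennreal_mult ennreal_plus)
      moreover have "ennreal (\<beta>*ch + ch) \<le> ennreal (\<beta>*ch * s + \<gamma>)"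
        using c3 by (rule ennreal_leI)
      ultimately show ?thesis by simp
    qed
  qed
qed

lemma rho_top:
  fixes p a :: real
  assumes p: "p > 1" and C: "chi p TYPE('a::euclidean_space) = top" and a: "a > 0"
  shows "rho p a TYPE('a) = top"
proof -
  have "top \<le> rho p a TYPE('a)"
    unfolding rho_def
  proof (rule INF_greatest)
    fix h :: "'a \<Rightarrow> real"
    assume "h \<in> {h. memLp (2*p) h \<and> Lnorm (2*p) h = 1}"
    then have hm: "memLp (2*p) h" and hn: "Lnorm (2*p) h = 1" by auto
    show "top \<le> ennreal a * Lpow 2 h + grad_sq h / 2"
    proof (cases "Lpow 2 h")
      case top
      then show ?thesis using a by (simp add: ennreal_mult_top)
    next
      case (real s)
      have one: "Lpow (2*p) h = 1" using Lnorm_one[OF hm _ hn] p by simp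
      have "Lpow 2 h \<noteq> 0" using Lpow2_pos[OF hm _ one] p by simp
      then have s: "s > 0" using real by auto
      have K: "top \<le> ennreal (s powr (2*(p/(p-1))/DIM('a) - 1)) * (grad_sq h / 2)"
        using key[OF p hm hn real(2) s] C by simp
      have "grad_sq h / 2 = top"
      proof (rule ccontr)
        assume "grad_sq h / 2 \<noteq> top"
        then obtain \<gamma> where "grad_sq h / 2 = ennreal \<gamma>" "\<gamma> \<ge> 0" by (cases "grad_sq h / 2") auto
        then show False using K by (simp add: ennreal_mult[symmetric] top_unique)
      qed
      then show ?thesis by simp
    qed
  qed
  then show ?thesis by (simp add: top_unique)
qed

theorem proposition1p4:
  fixes p :: real
  assumes "p > 1" and "p * (real DIM('a::euclidean_space) - 2) < real DIM('a)"
  shows "(INF a \<in> {0<..}. ereal a - enn2ereal (rho p a TYPE('a))) = - enn2ereal (chi p TYPE('a))"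
proof -
  have p: "p > 1" using assms(1) .
  define \<beta> where "\<beta> = 2*(p/(p-1))/DIM('a) - 1"
  have b: "\<beta> > 0"
  proof -
    have d: "real DIM('a) > 0" by simp
    have "real DIM('a) * (p - 1) < 2 * p" using assms(2) by (simp add: algebra_simps)
    then have "real DIM('a) < 2 * (p / (p - 1))" using p by (simp add: field_simps)
    then have "1 < 2 * (p / (p - 1)) / real DIM('a)" using d by (simp only: less_divide_eq_1_pos)
    then show ?thesis unfolding \<beta>_def by simp
  qed
  let ?I = "(INF a \<in> {0<..}. ereal a - enn2ereal (rho p a TYPE('a)))"
  show ?thesis
  proof (cases "chi p TYPE('a)")
    case top
    have "?I \<le> ereal 1 - enn2ereal (rho p 1 TYPE('a))" by (rule INF_lower) auto
    also have "\<dots> = - \<infinity>" using rho_top[OF p top, of 1] by simp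
    finally show ?thesis using top by simp
  next
    case (real ch)
    note C = real
    have lower: "- enn2ereal (chi p TYPE('a)) \<le> ?I"
    proof (rule INF_greatest)
      fix a :: real assume "a \<in> {0<..}"
      then have a: "a > 0" by simp
      have le: "rho p a TYPE('a) \<le> ennreal (a + ch)"
        using rho_le_chi[OF a, where 'a='a and p=p] C a by (simp add: ennreal_plus)
      show "- enn2ereal (chi p TYPE('a)) \<le> ereal a - enn2ereal (rho p a TYPE('a))"
      proof (cases "rho p a TYPE('a)")
        case top then show ?thesis using le by (simp add: top_unique)
      next
        case (real r)
        then have "ennreal r \<le> ennreal (a + ch)" using le by (simp del: ennreal_plus)
        then have "r \<le> a + ch" using C a by (subst (asm) ennreal_le_iff) auto
        then show ?thesis using real C by simp
      qed
    qed
    have upper: "?I \<le> - enn2ereal (chi p TYPE('a))"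
    proof (cases "ch = 0")
      case True
      show ?thesis
      proof (rule ereal_le_epsilon2)
        fix e :: real assume e: "0 < e"
        have "?I \<le> ereal e - enn2ereal (rho p e TYPE('a))" by (rule INF_lower) (use e in auto)
        also have "\<dots> \<le> ereal e" by (rule ereal_diff_le_self) simp
        moreover have "enn2ereal (chi p TYPE('a)) = 0" using C True enn2ereal_ennreal[of 0] by simp
        ultimately show "?I \<le> - enn2ereal (chi p TYPE('a)) + ereal e" by simp
      qed
    next
      case False
      then have chi: "ch > 0" using C by simp
      have a: "\<beta> * ch > 0" using b chi by simp
      have ge: "ennreal (\<beta>*ch + ch) \<le> rho p (\<beta>*ch) TYPE('a)"
        by (rule rho_ge[OF p b \<beta>_def C(2) chi])
      have "?I \<le> ereal (\<beta>*ch) - enn2ereal (rho p (\<beta>*ch) TYPE('a))" by (rule INF_lower) (use a in auto)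
      also have "\<dots> \<le> - enn2ereal (chi p TYPE('a))"
      proof (cases "rho p (\<beta>*ch) TYPE('a)")
        case top then show ?thesis by simp
      next
        case (real r)
        then have "\<beta>*ch + ch \<le> r" using ge by simp
        then show ?thesis using real C by simp
      qed
      finally show ?thesis .
    qed
    from lower upper show ?thesis by (rule antisym[rotated])
  qed
qed


end
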